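(* Let $W=(\omega_1,\ldots,\omega_r)$ be a $C(x)$-vector space basis of $A$. Let $f=\frac{aW}{u}$ and $g=\frac{bW}{v}$ with $a,b\in C[x]^r$, $u,v\in C[x]$, where $\gcd$ of $u$ with the entries of $a$ is $1$ and $\gcd$ of $v$ with the entries of $b$ is $1$. Let $\alpha\in\bar C$, and suppose $f=\Delta g$ and $\operatorname{disp}_\alpha(v)\ge0$. (i) If $W$ is a local integral basis of $A$ at every point of $\alpha+\mathbb Z$, then $\operatorname{disp}_\alpha(u)\ge\operatorname{disp}_\alpha(v)+1$. (ii) Let $e\in C[x]$ and $M\in C[x]^{r\times r}$ with $SW=\frac1e MW$. Let $\beta\in\alpha+\mathbb Z$, suppose $W$ is a local integral basis of $A$ at $Z:=\{\eta\in\alpha+\mathbb Z\mid\eta\le\beta\}$ and that $\beta$ is the only possible root of $e$ in $\alpha+\mathbb Z$. Then $\operatorname{disp}_\alpha((x-\beta)u)\ge1$; i.e. $u$ has a root in $\alpha+\mathbb Z$ distinct from $\beta$.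
   Context: Let $C$ be a field of characteristic zero and $\bar C$ its algebraic closure; $\sigma(f)(x)=f(x+1)$ on $C(x)$, $C(x)[S]$ the Ore algebra with $Sf=\sigma(f)S$, $\Delta=S-1$. Fix $L=\sum_{i=0}^r\ell_iS^i\in C[x][S]$ with $\ell_0\ell_r\ne0$ and $A=C(x)[S]/C(x)[S]L$. For $\alpha\in\bar C$, operators $P=\sum p_iS^i$ act on $b:\alpha+\mathbb Z\to\bar C((q))$ by $(P\cdot b)(z)=\sum p_i(z+q)b(z+i)$; $\operatorname{Sol}_\alpha(L)=\{b: L\cdot b=0\}$; $\operatorname{val}_\alpha(f)=\min_{b\in\operatorname{Sol}_\alpha(L)}(\nu_q((f\cdot b)(\alpha))-\liminf_n\nu_q(b(\alpha-n)))$ ($\nu_q$ the $q$-adic valuation, $\infty-\infty=\infty$); $f$ is integral at $\alpha$ if $\operatorname{val}_\alpha(f)\ge0$; a local integral basis at $\alpha$ is a basis of the $C(x)_\alpha$-module of integral elements at $\alpha$, where $C(x)_\alpha=\{p/q:q(\alpha)\neq0\}$; a local integral basis at a set is one at each of its points. On $\alpha+\mathbb Z$, $\beta<\gamma$ means $\beta-\gamma$ is a negative integer. Notation: for $a=(a_1,\dots,a_r)\in C[x]^r$ and $u\in C[x]$, $\frac{aW}{u}=\frac1u\sum a_i\omega_i$, and $SW=(S\omega_1,\dots,S\omega_r)$. For $p\in C[x]$ and $\alpha\in\bar C$, the dispersion is $\operatorname{disp}_\alpha(p)=\max\{k\in\mathbb N\mid\exists\xi\in\alpha+\mathbb Z:\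 p(\xi)=p(\xi+k)=0\}$, with $\max\emptyset=-\infty$. *)

theory Defs
  imports "HOL-Computational_Algebra.Computational_Algebra"
          "HOL-Library.Extended_Real"
begin

(* Base field C = 'c (char 0), algebraic closure \bar C = 'k with       *)
(* embedding \<iota> : 'c \<Rightarrow> 'k.                                      *)

definition is_alg_closure :: "('c::field \<Rightarrow> 'k::field) \<Rightarrow> bool" where
  "is_alg_closure \<iota> \<longleftrightarrow>
     \<iota> 0 = 0 \<and> \<iota> 1 = 1 \<and> (\<forall>a b. \<iota> (a + b) = \<iota> a + \<iota> b) \<and>
     (\<forall>a b. \<iota> (a * b) = \<iota> a * \<iota> b) \<and> inj \<iota> \<and>
     (\<forall>p :: 'k poly. degree p \<ge> 1 \<longrightarrow> (\<exists>z. poly p z = 0)) \<and>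
     (\<forall>z :: 'k. \<exists>p :: 'c poly. p \<noteq> 0 \<and> poly (map_poly \<iota> p) z = 0)"

(* C(x) = 'c poly fract.  Elements of C(x)[S] are represented by their
   coefficient sequence as a ('c poly fract) poly (only used as a container
   for coefficients; Ore multiplication is defined by hand below). *)

definition sigma_rat :: "'c::{field_char_0,field_gcd} poly fract \<Rightarrow> 'c poly fract" where
  "sigma_rat f = (case quot_of_fract f of (n, d) \<Rightarrow>
      to_fract (pcompose n [:1, 1:]) / to_fract (pcompose d [:1, 1:]))"

(* L is given as an 'c poly poly : coefficient i is l_i \<in> C[x]; r = degree L *)
definition Lrat :: "'c::field_gcd poly poly \<Rightarrow> 'c poly fract poly" where
  "Lrat L = map_poly to_fract L"

(* A = C(x)[S] / C(x)[S] L, elements represented by the unique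
   representative of S-degree < r *)
definition in_A :: "'c::field_gcd poly poly \<Rightarrow> 'c poly fract poly \<Rightarrow> bool" where
  "in_A L F \<longleftrightarrow> (\<forall>i\<ge>degree L. coeff F i = 0)"

(* left multiplication by S in A :  S (sum p_i S^i) = sum sigma(p_i) S^(i+1),
   reduced modulo the left ideal C(x)[S] L *)
definition shiftS :: "'c::{field_char_0,field_gcd} poly poly \<Rightarrow> 'c poly fract poly \<Rightarrow> 'c poly fract poly" where
  "shiftS L F = (let G = pCons 0 (map_poly sigma_rat F) in
      G - smult (coeff G (degree L) / to_fract (lead_coeff L)) (Lrat L))"

definition DeltaA :: "'c::{field_char_0,field_gcd} poly poly \<Rightarrow> 'c poly fract poly \<Rightarrow> 'c poly fract poly" where
  "DeltaA L F = shiftS L F - F"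

(* aW/u = (1/u) sum_i a_i w_i *)
definition combW :: "nat \<Rightarrow> (nat \<Rightarrow> 'c::field_gcd poly fract poly) \<Rightarrow> (nat \<Rightarrow> 'c poly fract) \<Rightarrow> 'c poly fract poly" where
  "combW r W c = (\<Sum>i<r. smult (c i) (W i))"

definition fracW :: "nat \<Rightarrow> (nat \<Rightarrow> 'c::field_gcd poly fract poly) \<Rightarrow> (nat \<Rightarrow> 'c poly) \<Rightarrow> 'c poly \<Rightarrow> 'c poly fract poly" where
  "fracW r W a u = combW r W (\<lambda>i. to_fract (a i) / to_fract u)"

definition is_basis_A :: "'c::field_gcd poly poly \<Rightarrow> (nat \<Rightarrow> 'c poly fract poly) \<Rightarrow> bool" where
  "is_basis_A L W \<longleftrightarrow> (\<forall>i<degree L. in_A L (W i)) \<and>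
     (\<forall>F. in_A L F \<longrightarrow> (\<exists>!c. (\<forall>i\<ge>degree L. c i = 0) \<and> F = combW (degree L) W c))"

(* Action on sequences b : \<eta> + Z \<rightarrow> \bar C((q)); b n stands for b(\<eta>+n)  *)

definition peval_q :: "('c::field \<Rightarrow> 'k::field) \<Rightarrow> 'k \<Rightarrow> 'c poly \<Rightarrow> 'k fls" where
  "peval_q \<iota> z p = poly (map_poly (\<lambda>c. fls_const (\<iota> c)) p) (fls_const z + fls_X)"

definition reval_q :: "('c::{field_char_0,field_gcd} \<Rightarrow> 'k::field) \<Rightarrow> 'k \<Rightarrow> 'c poly fract \<Rightarrow> 'k fls" where
  "reval_q \<iota> z f = (case quot_of_fract f of (n, d) \<Rightarrow> peval_q \<iota> z n / peval_q \<iota> z d)"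

definition op_act :: "('c::{field_char_0,field_gcd} \<Rightarrow> 'k::field) \<Rightarrow> 'k \<Rightarrow> 'c poly fract poly
     \<Rightarrow> (int \<Rightarrow> 'k fls) \<Rightarrow> int \<Rightarrow> 'k fls" where
  "op_act \<iota> \<eta> P b n = (\<Sum>i\<le>degree P. reval_q \<iota> (\<eta> + of_int n) (coeff P i) * b (n + int i))"

definition Sol :: "('c::{field_char_0,field_gcd} \<Rightarrow> 'k::field) \<Rightarrow> 'k \<Rightarrow> 'c poly poly \<Rightarrow> (int \<Rightarrow> 'k fls) set" where
  "Sol \<iota> \<eta> L = {b. \<forall>n. op_act \<iota> \<eta> (Lrat L) b n = 0}"

definition nu_q :: "'k::zero fls \<Rightarrow> ereal" where
  "nu_q s = (if s = 0 then \<infinity> else ereal (real_of_int (fls_subdegree s)))"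

definition esub :: "ereal \<Rightarrow> ereal \<Rightarrow> ereal" where
  "esub x y = (if x = \<infinity> \<and> y = \<infinity> then \<infinity> else x - y)"

definition val_at :: "('c::{field_char_0,field_gcd} \<Rightarrow> 'k::field) \<Rightarrow> 'c poly poly \<Rightarrow> 'k \<Rightarrow> 'c poly fract poly \<Rightarrow> ereal" where
  "val_at \<iota> L \<eta> F = (INF b\<in>Sol \<iota> \<eta> L.
      esub (nu_q (op_act \<iota> \<eta> F b 0)) (liminf (\<lambda>n::nat. nu_q (b (- int n)))))"

definition integral_at :: "('c::{field_char_0,field_gcd} \<Rightarrow> 'k::field) \<Rightarrow> 'c poly poly \<Rightarrow> 'k \<Rightarrow> 'c poly fract poly \<Rightarrow> bool" where
  "integral_at \<iota> L \<eta> F \<longleftrightarrow> val_at \<iota> L \<eta> F \<ge> 0"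

definition local_ring :: "('c::field_gcd \<Rightarrow> 'k::field) \<Rightarrow> 'k \<Rightarrow> 'c poly fract set" where
  "local_ring \<iota> \<eta> = {f. \<exists>n d. poly (map_poly \<iota> d) \<eta> \<noteq> 0 \<and> f = to_fract n / to_fract d}"

definition local_integral_basis :: "('c::{field_char_0,field_gcd} \<Rightarrow> 'k::field) \<Rightarrow> 'c poly poly \<Rightarrow> 'k \<Rightarrow> (nat \<Rightarrow> 'c poly fract poly) \<Rightarrow> bool" where
  "local_integral_basis \<iota> L \<eta> W \<longleftrightarrow>
     {F. in_A L F \<and> integral_at \<iota> L \<eta> F} =
     {combW (degree L) W c | c. \<forall>i<degree L. c i \<in> local_ring \<iota> \<eta>}"

(* dispersion disp_\<alpha>(p), with max \<emptyset> = -\<infinity> *)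
definition disp :: "'k::field \<Rightarrow> 'k poly \<Rightarrow> ereal" where
  "disp \<alpha> p = Sup {ereal (real k) | k::nat. \<exists>m::int.
      poly p (\<alpha> + of_int m) = 0 \<and> poly p (\<alpha> + of_int m + of_nat k) = 0}"

end

theory Submission
  imports Defs "HOL-Analysis.Extended_Real_Limits"
begin

definition rhom :: "('a::comm_ring_1 \<Rightarrow> 'b::comm_ring_1) \<Rightarrow> bool" where
  "rhom h \<longleftrightarrow> h 0 = 0 \<and> h 1 = 1 \<and> (\<forall>a b. h (a + b) = h a + h b) \<and> (\<forall>a b. h (a * b) = h a * h b)"

lemma rhomD: assumes "rhom h" shows "h 0 = 0" "h 1 = 1" "h (a + b) = h a + h b" "h (a * b) = h a * h b"
  using assms by (auto simp: rhom_def)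

lemma rhom_uminus: "rhom h \<Longrightarrow> h (- a) = - h a"
proof -
  assume h: "rhom h"
  have "h (a + - a) = 0" using rhomD(1)[OF h] by simp
  then show ?thesis using rhomD(3)[OF h, of a "-a"] by (simp add: add_eq_0_iff)
qed

lemma rhom_diff: "rhom h \<Longrightarrow> h (a - b) = h a - h b"
  using rhomD(3)[of h a "-b"] rhom_uminus[of h b] by simp

lemma map_poly_add_h: "rhom h \<Longrightarrow> map_poly h (p + q) = map_poly h p + map_poly h q"
  by (intro poly_eqI) (simp add: coeff_map_poly rhomD)

lemma map_poly_mult_h: "rhom h \<Longrightarrow> map_poly h (p * q) = map_poly h p * map_poly h q"
proof (induction p)
  case 0 then show ?case by simp
next
  case (pCons a p)
  have "map_poly h (pCons a p * q) = map_poly h (smult a q + pCons 0 (p * q))" by simp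
  also have "\<dots> = smult (h a) (map_poly h q) + pCons 0 (map_poly h p * map_poly h q)"
    using pCons by (simp add: map_poly_add_h map_poly_smult map_poly_pCons rhomD)
  also have "\<dots> = map_poly h (pCons a p) * map_poly h q"
    using pCons by (simp add: map_poly_pCons rhomD)
  finally show ?case .
qed

lemma map_poly_pcompose_h: "rhom h \<Longrightarrow> map_poly h (pcompose p q) = pcompose (map_poly h p) (map_poly h q)"
proof (induction p)
  case 0 then show ?case by simp
next
  case (pCons a p)
  then show ?case by (simp add: pcompose_pCons map_poly_add_h map_poly_mult_h map_poly_pCons rhomD)
qed

lemma ev_add: "rhom h \<Longrightarrow> poly (map_poly h (p + q)) x = poly (map_poly h p) x + poly (map_poly h q) x"
  by (simp add: map_poly_add_h)
lemma ev_mult: "rhom h \<Longrightarrow> poly (map_poly h (p * q)) x = poly (map_poly h p) x * poly (map_poly h q) x"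
  by (simp add: map_poly_mult_h)
lemma ev_pcompose: "rhom h \<Longrightarrow> poly (map_poly h (pcompose p q)) x = poly (map_poly h p) (poly (map_poly h q) x)"
  by (simp add: map_poly_pcompose_h poly_pcompose)

lemma rhom_fls_const: "rhom (fls_const :: 'a::comm_ring_1 \<Rightarrow> 'a fls)"
  unfolding rhom_def by (auto intro: fls_eqI)

lemma rhom_comp: "rhom f \<Longrightarrow> rhom g \<Longrightarrow> rhom (\<lambda>x. f (g x))"
  by (simp add: rhom_def)

lemma poly_fls_X_nth:
  "(\<forall>n::nat. fls_nth (poly (map_poly fls_const q) fls_X) (int n) = coeff q n) \<and>
   (\<forall>n::int. n < 0 \<longrightarrow> fls_nth (poly (map_poly fls_const q) (fls_X :: 'a::comm_ring_1 fls)) n = 0)"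
proof (induction q)
  case 0 then show ?case by simp
next
  case (pCons a p)
  have e: "poly (map_poly fls_const (pCons a p)) fls_X = fls_const a + fls_X * poly (map_poly fls_const p) (fls_X :: 'a fls)"
    by (simp add: map_poly_pCons)
  show ?case unfolding e using pCons
    apply (auto simp: fls_X_times_conv_shift coeff_pCons split: nat.splits)
    done
qed

lemma poly_fls_X_nz:
  assumes "q \<noteq> 0" shows "poly (map_poly fls_const q) (fls_X :: 'a::comm_ring_1 fls) \<noteq> 0"
proof
  assume h: "poly (map_poly fls_const q) (fls_X :: 'a fls) = 0"
  have "\<forall>n. coeff q n = 0"
    using poly_fls_X_nth[of q] h by (metis fls_zero_nth)
  then show False using assms by (simp add: poly_eq_iff)
qed

definition fhom :: "('a::{ring_gcd,semiring_gcd_mult_normalize,idom_divide} \<Rightarrow> 'b::field) \<Rightarrow> 'a fract \<Rightarrow> 'b" where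
  "fhom \<Phi> f = (case quot_of_fract f of (n, d) \<Rightarrow> \<Phi> n / \<Phi> d)"

lemma fract_repr: "\<exists>n d. d \<noteq> 0 \<and> x = to_fract n / to_fract d \<and> quot_of_fract x = (n, d)"
  apply (rule exI[of _ "fst (quot_of_fract x)"], rule exI[of _ "snd (quot_of_fract x)"])
  by (metis Fract_conv_to_fract Fract_quot_of_fract prod.collapse snd_quot_of_fract_nonzero)

lemma fhom_frac:
  fixes \<Phi> :: "'a::{ring_gcd,semiring_gcd_mult_normalize,idom_divide} \<Rightarrow> 'b::field"
  assumes mult: "\<And>p q. \<Phi> (p * q) = \<Phi> p * \<Phi> q" and nz: "\<And>p. p \<noteq> 0 \<Longrightarrow> \<Phi> p \<noteq> 0"
    and q: "q \<noteq> 0"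
  shows "fhom \<Phi> (to_fract p / to_fract q) = \<Phi> p / \<Phi> q"
proof -
  obtain n d where d: "d \<noteq> 0" and x: "to_fract p / to_fract q = to_fract n / to_fract d"
    and qu: "quot_of_fract (to_fract p / to_fract q) = (n, d)"
    using fract_repr[of "to_fract p / to_fract q"] by blast
  have "to_fract p * to_fract d = to_fract n * to_fract q"
    using x d q by (simp add: divide_eq_eq eq_divide_eq field_simps)
  then have "p * d = n * q" by (metis to_fract_mult to_fract_eq_iff)
  then have "\<Phi> p * \<Phi> d = \<Phi> n * \<Phi> q" by (metis mult)
  then show ?thesis using qu nz[OF d] nz[OF q] unfolding fhom_def
    by (simp add: frac_eq_eq)
qed

lemma fhom_ops:
  fixes \<Phi> :: "'a::{ring_gcd,semiring_gcd_mult_normalize,idom_divide} \<Rightarrow> 'b::field"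
  assumes h: "rhom \<Phi>" and nz: "\<And>p. p \<noteq> 0 \<Longrightarrow> \<Phi> p \<noteq> 0"
  shows "fhom \<Phi> (x + y) = fhom \<Phi> x + fhom \<Phi> y"
    and "fhom \<Phi> (x * y) = fhom \<Phi> x * fhom \<Phi> y"
    and "fhom \<Phi> 0 = 0" and "fhom \<Phi> (to_fract p) = \<Phi> p"
proof -
  have m: "\<And>p q. \<Phi> (p * q) = \<Phi> p * \<Phi> q" using rhomD(4)[OF h] .
  obtain n1 d1 where 1: "d1 \<noteq> 0" "x = to_fract n1 / to_fract d1" using fract_repr by blast
  obtain n2 d2 where 2: "d2 \<noteq> 0" "y = to_fract n2 / to_fract d2" using fract_repr by blast
  have fx: "fhom \<Phi> x = \<Phi> n1 / \<Phi> d1" unfolding 1(2) by (rule fhom_frac[OF m nz 1(1)])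
  have fy: "fhom \<Phi> y = \<Phi> n2 / \<Phi> d2" unfolding 2(2) by (rule fhom_frac[OF m nz 2(1)])
  have d12: "d1 * d2 \<noteq> 0" using 1 2 by simp
  have e: "x + y = to_fract (n1 * d2 + n2 * d1) / to_fract (d1 * d2)"
    using 1 2 by (simp add: field_simps)
  have "fhom \<Phi> (x + y) = \<Phi> (n1 * d2 + n2 * d1) / \<Phi> (d1 * d2)"
    unfolding e by (rule fhom_frac[OF m nz d12])
  then show "fhom \<Phi> (x + y) = fhom \<Phi> x + fhom \<Phi> y"
    unfolding fx fy using nz[OF 1(1)] nz[OF 2(1)]
    by (simp add: rhomD[OF h] field_simps)
  have e: "x * y = to_fract (n1 * n2) / to_fract (d1 * d2)"
    using 1 2 by (simp add: field_simps)
  have "fhom \<Phi> (x * y) = \<Phi> (n1 * n2) / \<Phi> (d1 * d2)"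
    unfolding e by (rule fhom_frac[OF m nz d12])
  then show "fhom \<Phi> (x * y) = fhom \<Phi> x * fhom \<Phi> y"
    unfolding fx fy using nz[OF 1(1)] nz[OF 2(1)]
    by (simp add: rhomD[OF h] field_simps)
  show "fhom \<Phi> 0 = 0" by (simp add: fhom_def rhomD[OF h])
  show "fhom \<Phi> (to_fract p) = \<Phi> p" by (simp add: fhom_def rhomD[OF h])
qed

lemma fhom_diff:
  fixes \<Phi> :: "'a::{ring_gcd,semiring_gcd_mult_normalize,idom_divide} \<Rightarrow> 'b::field"
  assumes h: "rhom \<Phi>" and nz: "\<And>p. p \<noteq> 0 \<Longrightarrow> \<Phi> p \<noteq> 0"
  shows "fhom \<Phi> (x - y) = fhom \<Phi> x - fhom \<Phi> y"
  using fhom_ops(1)[OF h nz, of "x - y" y] by simp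

lemma clos_rhom: "is_alg_closure \<iota> \<Longrightarrow> rhom \<iota>"
  by (simp add: is_alg_closure_def rhom_def)

lemma clos_inj: "is_alg_closure \<iota> \<Longrightarrow> inj \<iota>"
  by (simp add: is_alg_closure_def)

lemma map_poly_inj_nz:
  assumes "rhom \<iota>" "inj \<iota>" "p \<noteq> 0" shows "map_poly \<iota> p \<noteq> 0"
proof -
  have "\<iota> x \<noteq> 0" if "x \<noteq> 0" for x
    using assms(2) rhomD(1)[OF assms(1)] that by (metis injD)
  then show ?thesis using assms(3) rhomD(1)[OF assms(1)] by (simp add: map_poly_eq_0_iff)
qed

lemma peval_rhom:
  fixes \<iota> :: "'c::field \<Rightarrow> 'k::field"
  assumes "rhom \<iota>" shows "rhom (peval_q \<iota> z)"
proof -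
  have h: "rhom (\<lambda>c. fls_const (\<iota> c))" using rhom_comp[OF rhom_fls_const assms] .
  show ?thesis unfolding rhom_def peval_q_def
    using ev_add[OF h] ev_mult[OF h] rhomD[OF h] by simp
qed

lemma peval_alt:
  fixes \<iota> :: "'c::field \<Rightarrow> 'k::field"
  assumes "rhom \<iota>"
  shows "peval_q \<iota> z p = poly (map_poly fls_const (pcompose (map_poly \<iota> p) [:z, 1:])) fls_X"
proof -
  have "map_poly (\<lambda>c. fls_const (\<iota> c)) p = map_poly fls_const (map_poly \<iota> p)"
    using rhomD(1)[OF assms] by (simp add: map_poly_map_poly o_def)
  moreover have "poly (map_poly fls_const [:z, 1:]) (fls_X :: 'k fls) = fls_const z + fls_X"
    by (simp add: map_poly_pCons)
  ultimately show ?thesis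
    unfolding peval_q_def ev_pcompose[OF rhom_fls_const] by simp
qed

lemma peval_nz:
  fixes \<iota> :: "'c::field \<Rightarrow> 'k::field"
  assumes "rhom \<iota>" "inj \<iota>" "p \<noteq> 0" shows "peval_q \<iota> z p \<noteq> 0"
proof -
  have "map_poly \<iota> p \<noteq> 0" using map_poly_inj_nz[OF assms] .
  then have "pcompose (map_poly \<iota> p) [:z, 1:] \<noteq> 0" by (simp add: pcompose_eq_0_iff)
  then show ?thesis unfolding peval_alt[OF assms(1)] by (rule poly_fls_X_nz)
qed

lemma peval_shift:
  fixes \<iota> :: "'c::field \<Rightarrow> 'k::field"
  assumes "rhom \<iota>"
  shows "peval_q \<iota> z (pcompose p [:1, 1:]) = peval_q \<iota> (z + 1) p"
proof -
  have h: "rhom (\<lambda>c. fls_const (\<iota> c))" using rhom_comp[OF rhom_fls_const assms] .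
  have "poly (map_poly (\<lambda>c. fls_const (\<iota> c)) [:1, 1:]) (fls_const z + fls_X) = (fls_const (z + 1) + fls_X :: 'k fls)"
    using rhomD[OF h] rhomD(3)[OF rhom_fls_const, of z 1] by (simp add: map_poly_pCons)
  then show ?thesis unfolding peval_q_def ev_pcompose[OF h] by simp
qed

lemma reval_fhom: "reval_q \<iota> z f = fhom (peval_q \<iota> z) f"
  by (simp add: reval_q_def fhom_def)

definition sigp :: "'c::{field_char_0,field_gcd} poly \<Rightarrow> 'c poly fract" where
  "sigp p = to_fract (pcompose p [:1, 1:])"

lemma sigma_fhom: "sigma_rat f = fhom sigp f"
  by (simp add: sigma_rat_def fhom_def sigp_def)

lemma sig_rhom: "rhom sigp"
  by (simp add: rhom_def pcompose_add pcompose_mult pcompose_1 sigp_def)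

lemma sig_nz: "p \<noteq> 0 \<Longrightarrow> sigp p \<noteq> 0"
  by (simp add: pcompose_eq_0_iff sigp_def)

lemma sigma_ops:
  "sigma_rat (x + y) = sigma_rat x + sigma_rat (y::'c::{field_char_0,field_gcd} poly fract)"
  "sigma_rat (x * y) = sigma_rat x * sigma_rat y"
  "sigma_rat 0 = 0"
  "q \<noteq> 0 \<Longrightarrow> sigma_rat (to_fract p / to_fract q) = to_fract (pcompose p [:1,1:]) / to_fract (pcompose q [:1,1:])"
proof -
  have nz: "\<And>p. p \<noteq> 0 \<Longrightarrow> sigp p \<noteq> 0" by (rule sig_nz)
  have m: "\<And>p q. sigp (p * q) = sigp p * sigp q" by (rule rhomD(4)[OF sig_rhom])
  show "sigma_rat (x + y) = sigma_rat x + sigma_rat (y::'c::{field_char_0,field_gcd} poly fract)"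
    unfolding sigma_fhom by (rule fhom_ops(1), rule sig_rhom, erule sig_nz)
  show "sigma_rat (x * y) = sigma_rat x * sigma_rat y"
    unfolding sigma_fhom by (rule fhom_ops(2), rule sig_rhom, erule sig_nz)
  show "sigma_rat 0 = 0" by (simp add: sigma_rat_def)
  show "q \<noteq> 0 \<Longrightarrow> sigma_rat (to_fract p / to_fract q) = to_fract (pcompose p [:1,1:]) / to_fract (pcompose q [:1,1:])"
  proof -
    assume q: "q \<noteq> 0"
    have "fhom sigp (to_fract p / to_fract q) = sigp p / sigp q"
      by (rule fhom_frac, rule m, erule sig_nz, rule q)
    then show ?thesis unfolding sigma_fhom sigp_def .
  qed
qed

lemma reval_0 [simp]: "reval_q \<iota> z 0 = 0"
  by (simp add: reval_q_def peval_q_def)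

context
  fixes \<iota> :: "'c::{field_char_0,field_gcd} \<Rightarrow> 'k::field_char_0"
  assumes hi: "rhom \<iota>" and ii: "inj \<iota>"
begin

lemma reval_add: "reval_q \<iota> z (x + y) = reval_q \<iota> z x + reval_q \<iota> z y"
  unfolding reval_fhom by (rule fhom_ops(1), rule peval_rhom[OF hi], erule peval_nz[OF hi ii])

lemma reval_mult: "reval_q \<iota> z (x * y) = reval_q \<iota> z x * reval_q \<iota> z y"
  unfolding reval_fhom by (rule fhom_ops(2), rule peval_rhom[OF hi], erule peval_nz[OF hi ii])

lemma reval_diff: "reval_q \<iota> z (x - y) = reval_q \<iota> z x - reval_q \<iota> z y"
  unfolding reval_fhom by (rule fhom_diff, rule peval_rhom[OF hi], erule peval_nz[OF hi ii])

lemma reval_frac: "q \<noteq> 0 \<Longrightarrow> reval_q \<iota> z (to_fract p / to_fract q) = peval_q \<iota> z p / peval_q \<iota> z q"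
  unfolding reval_fhom by (rule fhom_frac, rule rhomD(4)[OF peval_rhom[OF hi]], erule peval_nz[OF hi ii])

lemma reval_sigma: "reval_q \<iota> z (sigma_rat x) = reval_q \<iota> (z + 1) x"
proof -
  obtain n d where d: "d \<noteq> 0" and x: "x = to_fract n / to_fract d" and qu: "quot_of_fract x = (n, d)"
    using fract_repr by blast
  have "sigma_rat x = to_fract (pcompose n [:1,1:]) / to_fract (pcompose d [:1,1:])"
    unfolding x by (rule sigma_ops(4)[OF d])
  moreover have "pcompose d [:1,1:] \<noteq> 0" using d by (simp add: pcompose_eq_0_iff)
  ultimately have "reval_q \<iota> z (sigma_rat x) = peval_q \<iota> z (pcompose n [:1,1:]) / peval_q \<iota> z (pcompose d [:1,1:])"
    using reval_frac by simp
  also have "\<dots> = peval_q \<iota> (z+1) n / peval_q \<iota> (z+1) d" by (simp add: peval_shift[OF hi])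
  also have "\<dots> = reval_q \<iota> (z+1) x" by (simp add: reval_q_def qu)
  finally show ?thesis .
qed

lemma op_act_ext:
  assumes "degree P \<le> N"
  shows "op_act \<iota> \<eta> P b n = (\<Sum>i\<le>N. reval_q \<iota> (\<eta> + of_int n) (coeff P i) * b (n + int i))"
  unfolding op_act_def
  by (rule sum.mono_neutral_left) (use assms in \<open>auto simp: coeff_eq_0\<close>)

lemma op_act_diff: "op_act \<iota> \<eta> (P - Q) b n = op_act \<iota> \<eta> P b n - op_act \<iota> \<eta> Q b n"
proof -
  let ?N = "max (degree P) (degree Q)"
  have "degree (P - Q) \<le> ?N" by (rule degree_diff_le) auto
  then show ?thesis
    using op_act_ext[of P ?N] op_act_ext[of Q ?N] op_act_ext[of "P - Q" ?N]
    by (simp add: reval_diff algebra_simps sum_subtractf)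
qed

lemma op_act_smult: "op_act \<iota> \<eta> (smult c P) b n = reval_q \<iota> (\<eta> + of_int n) c * op_act \<iota> \<eta> P b n"
proof -
  have "degree (smult c P) \<le> degree P" by (rule degree_smult_le)
  then show ?thesis
    using op_act_ext[of P "degree P"] op_act_ext[of "smult c P" "degree P"]
    by (simp add: reval_mult sum_distrib_left mult.assoc)
qed

lemma op_act_shift: "op_act \<iota> (\<eta> + 1) P (\<lambda>n. b (n + 1)) n = op_act \<iota> \<eta> P b (n + 1)"
  unfolding op_act_def by (intro sum.cong refl) (simp add: algebra_simps)

lemma op_act_shiftS:
  assumes sol: "b \<in> Sol \<iota> \<eta> L"
  shows "op_act \<iota> \<eta> (shiftS L F) b 0 = op_act \<iota> (\<eta> + 1) F (\<lambda>n. b (n + 1)) 0"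
proof -
  define G where "G = pCons 0 (map_poly sigma_rat F)"
  define c where "c = coeff G (degree L) / to_fract (lead_coeff L)"
  have sh: "shiftS L F = G - smult c (Lrat L)" by (simp add: shiftS_def G_def c_def Let_def)
  have L0: "op_act \<iota> \<eta> (Lrat L) b 0 = 0" using sol by (simp add: Sol_def)
  have degG: "degree G \<le> Suc (degree F)"
    using degree_pCons_le[of 0 "map_poly sigma_rat F"] map_poly_degree_leq[of sigma_rat F]
    unfolding G_def by linarith
  have cG: "coeff G (Suc j) = sigma_rat (coeff F j)" for j
    by (simp add: G_def coeff_map_poly sigma_ops(3))
  have "op_act \<iota> \<eta> G b 0 = (\<Sum>i\<le>Suc (degree F). reval_q \<iota> \<eta> (coeff G i) * b (int i))"
    using op_act_ext[OF degG, of \<eta> b 0] by simp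
  also have "\<dots> = (\<Sum>j\<le>degree F. reval_q \<iota> \<eta> (coeff G (Suc j)) * b (int (Suc j)))"
    by (subst sum.atMost_Suc_shift) (simp add: G_def)
  also have "\<dots> = (\<Sum>j\<le>degree F. reval_q \<iota> (\<eta> + 1) (coeff F j) * b (int j + 1))"
    by (simp add: cG reval_sigma add.commute)
  also have "\<dots> = op_act \<iota> (\<eta> + 1) F (\<lambda>n. b (n + 1)) 0"
    by (simp add: op_act_def)
  finally show ?thesis unfolding sh op_act_diff op_act_smult L0 by simp
qed


lemma Sol_shift: "Sol \<iota> (\<eta> + 1) L = (\<lambda>b n. b (n + 1)) ` Sol \<iota> \<eta> L"
proof
  show "(\<lambda>b n. b (n + 1)) ` Sol \<iota> \<eta> L \<subseteq> Sol \<iota> (\<eta> + 1) L"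
    by (auto simp: Sol_def op_act_shift)
  show "Sol \<iota> (\<eta> + 1) L \<subseteq> (\<lambda>b n. b (n + 1)) ` Sol \<iota> \<eta> L"
  proof
    fix b' assume b': "b' \<in> Sol \<iota> (\<eta> + 1) L"
    define b where "b = (\<lambda>n. b' (n - 1))"
    have e: "(\<lambda>n. b (n + 1)) = b'" by (simp add: b_def)
    have "op_act \<iota> \<eta> (Lrat L) b n = 0" for n
      using op_act_shift[of \<eta> "Lrat L" b "n - 1"] b' unfolding e by (simp add: Sol_def)
    then have "b \<in> Sol \<iota> \<eta> L" by (simp add: Sol_def)
    then show "b' \<in> (\<lambda>b n. b (n + 1)) ` Sol \<iota> \<eta> L" using e by blast
  qed
qed

lemma liminf_shift_int: "liminf (\<lambda>n::nat. g (b (1 - int n))) = liminf (\<lambda>n::nat. (g (b (- int n)) :: ereal))"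
proof -
  have "liminf (\<lambda>n::nat. g (b (1 - int n))) = liminf (\<lambda>n::nat. g (b (1 - int (n + 1))))"
    using liminf_shift[of "\<lambda>n. g (b (1 - int n))"] by simp
  then show ?thesis by simp
qed

lemma val_shift: "val_at \<iota> L \<eta> (shiftS L F) = val_at \<iota> L (\<eta> + 1) F"
proof -
  have "val_at \<iota> L \<eta> (shiftS L F) = (INF b\<in>Sol \<iota> \<eta> L. (\<lambda>b'. esub (nu_q (op_act \<iota> (\<eta>+1) F b' 0)) (liminf (\<lambda>n::nat. nu_q (b' (- int n))))) (\<lambda>n. b (n + 1)))"
    unfolding val_at_def
    by (intro INF_cong refl) (simp add: op_act_shiftS liminf_shift_int)
  also have "\<dots> = val_at \<iota> L (\<eta> + 1) F"
    unfolding val_at_def Sol_shift by (simp add: image_comp)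
  finally show ?thesis .
qed

lemma integral_shift: "integral_at \<iota> L \<eta> (shiftS L F) \<longleftrightarrow> integral_at \<iota> L (\<eta> + 1) F"
  by (simp add: integral_at_def val_shift)

definition Ev :: "'k \<Rightarrow> 'c poly \<Rightarrow> 'k" where "Ev z p = poly (map_poly \<iota> p) z"

lemma Ev_mult: "Ev z (p * q) = Ev z p * Ev z q"
  unfolding Ev_def by (rule ev_mult[OF hi])
lemma Ev_add: "Ev z (p + q) = Ev z p + Ev z q"
  unfolding Ev_def by (rule ev_add[OF hi])
lemma Ev_1: "Ev z 1 = 1"
  unfolding Ev_def using rhomD(2)[OF hi] by simp
lemma Ev_0: "Ev z 0 = 0"
  unfolding Ev_def by simp
lemma Ev_shift: "Ev z (pcompose p [:1, 1:]) = Ev (z + 1) p"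
  unfolding Ev_def ev_pcompose[OF hi] using rhomD[OF hi] by (simp add: map_poly_pCons add.commute)

lemma LR_frac: "Ev z q \<noteq> 0 \<Longrightarrow> to_fract p / to_fract q \<in> local_ring \<iota> z"
  unfolding local_ring_def Ev_def by blast

lemma LR_elim: assumes "x \<in> local_ring \<iota> z" obtains n d where "Ev z d \<noteq> 0" "x = to_fract n / to_fract d"
  using assms unfolding local_ring_def Ev_def by blast

lemma Ev_nz_imp: "Ev z d \<noteq> 0 \<Longrightarrow> d \<noteq> 0"
  using Ev_0 by auto

lemma LR_add: "x \<in> local_ring \<iota> z \<Longrightarrow> y \<in> local_ring \<iota> z \<Longrightarrow> x + y \<in> local_ring \<iota> z"
proof -
  assume "x \<in> local_ring \<iota> z" "y \<in> local_ring \<iota> z"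
  then obtain n1 d1 n2 d2 where 1: "Ev z d1 \<noteq> 0" "x = to_fract n1 / to_fract d1"
    and 2: "Ev z d2 \<noteq> 0" "y = to_fract n2 / to_fract d2" by (meson LR_elim)
  have e: "x + y = to_fract (n1 * d2 + n2 * d1) / to_fract (d1 * d2)"
    using 1 2 Ev_nz_imp[OF 1(1)] Ev_nz_imp[OF 2(1)] by (simp add: field_simps)
  moreover have "Ev z (d1 * d2) \<noteq> 0" using 1 2 by (simp add: Ev_mult)
  then show ?thesis unfolding e by (rule LR_frac)
qed

lemma LR_mult: "x \<in> local_ring \<iota> z \<Longrightarrow> y \<in> local_ring \<iota> z \<Longrightarrow> x * y \<in> local_ring \<iota> z"
proof -
  assume "x \<in> local_ring \<iota> z" "y \<in> local_ring \<iota> z"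
  then obtain n1 d1 n2 d2 where 1: "Ev z d1 \<noteq> 0" "x = to_fract n1 / to_fract d1"
    and 2: "Ev z d2 \<noteq> 0" "y = to_fract n2 / to_fract d2" by (meson LR_elim)
  have e: "x * y = to_fract (n1 * n2) / to_fract (d1 * d2)"
    using 1 2 by (simp add: field_simps)
  moreover have "Ev z (d1 * d2) \<noteq> 0" using 1 2 by (simp add: Ev_mult)
  then show ?thesis unfolding e by (rule LR_frac)
qed

lemma LR_0: "0 \<in> local_ring \<iota> z"
  using LR_frac[of z 1 0] Ev_1 by simp

lemma LR_uminus: "x \<in> local_ring \<iota> z \<Longrightarrow> - x \<in> local_ring \<iota> z"
proof -
  assume "x \<in> local_ring \<iota> z"
  then obtain n d where 1: "Ev z d \<noteq> 0" "x = to_fract n / to_fract d" by (meson LR_elim)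
  then have e: "- x = to_fract (- n) / to_fract d" by simp
  show ?thesis unfolding e by (rule LR_frac) (rule 1(1))
qed

lemma LR_diff: "x \<in> local_ring \<iota> z \<Longrightarrow> y \<in> local_ring \<iota> z \<Longrightarrow> x - y \<in> local_ring \<iota> z"
  using LR_add[of x z "- y"] LR_uminus by simp

lemma LR_sum: "(\<And>i. i \<in> A \<Longrightarrow> f i \<in> local_ring \<iota> z) \<Longrightarrow> sum f A \<in> local_ring \<iota> z"
  by (induction A rule: infinite_finite_induct) (auto simp: LR_0 LR_add)

lemma LR_not:
  assumes "Ev z v = 0" "v \<noteq> 0" "to_fract p / to_fract v \<in> local_ring \<iota> z"
  shows "Ev z p = 0"
proof -
  obtain n d where 1: "Ev z d \<noteq> 0" "to_fract p / to_fract v = to_fract n / to_fract d"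
    using assms(3) by (meson LR_elim)
  have "to_fract p * to_fract d = to_fract n * to_fract v"
    using 1 Ev_nz_imp[OF 1(1)] assms(2) by (simp add: divide_eq_eq eq_divide_eq field_simps)
  then have "p * d = n * v" by (metis to_fract_mult to_fract_eq_iff)
  then have "Ev z p * Ev z d = 0" using assms(1) by (metis Ev_mult mult_zero_right)
  then show ?thesis using 1(1) by simp
qed

lemma Ev_Gcd: "finite S \<Longrightarrow> (\<And>s. s \<in> S \<Longrightarrow> Ev z s = 0) \<Longrightarrow> Ev z (Gcd S) = 0"
proof (induction S rule: finite_induct)
  case empty then show ?case by (simp add: Ev_0)
next
  case (insert a S)
  have "Ev z (gcd a (Gcd S)) = 0"
    unfolding bezout_coefficients_fst_snd[symmetric] using insert by (simp add: Ev_add Ev_mult)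
  then show ?case by (simp add: Gcd_insert)
qed



end

lemma sigma_rhom: "rhom (sigma_rat :: 'c::{field_char_0,field_gcd} poly fract \<Rightarrow> _)"
proof -
  have "sigma_rat (1 :: 'c poly fract) = 1" by (simp add: sigma_rat_def pcompose_1)
  then show ?thesis unfolding rhom_def using sigma_ops(1,2,3) by blast
qed

lemma pCons0_add: "pCons 0 (p + q) = pCons 0 p + pCons 0 q"
  by simp

lemma pCons0_smult: "pCons 0 (smult c p) = smult c (pCons 0 p)"
  by simp

lemma shiftS_add: "shiftS L (F1 + F2) = shiftS L F1 + shiftS L F2"
  unfolding shiftS_def Let_def map_poly_add_h[OF sigma_rhom] pCons0_add
  by (simp add: add_divide_distrib smult_add_left algebra_simps coeff_pCons split: nat.split)

lemma shiftS_smult: "shiftS L (smult c F) = smult (sigma_rat c) (shiftS L F)"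
proof -
  have "map_poly sigma_rat (smult c F) = smult (sigma_rat c) (map_poly sigma_rat F)"
    by (rule map_poly_smult) (simp_all add: sigma_ops)
  then show ?thesis unfolding shiftS_def Let_def pCons0_smult
    by (simp add: smult_diff_right mult.assoc coeff_pCons split: nat.split)
qed

lemma shiftS_0: "shiftS L 0 = 0"
  by (simp add: shiftS_def sigma_ops(3))

lemma shiftS_sum: "shiftS L (sum f A) = (\<Sum>i\<in>A. shiftS L (f i))"
  by (induction A rule: infinite_finite_induct) (simp_all add: shiftS_0 shiftS_add)

lemma shiftS_comb: "shiftS L (combW r W c) = (\<Sum>i<r. smult (sigma_rat (c i)) (shiftS L (W i)))"
  unfolding combW_def shiftS_sum by (simp add: shiftS_smult)

lemma smult_sum_right: "smult a (sum f A) = (\<Sum>i\<in>A. smult a (f i))"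
  by (induction A rule: infinite_finite_induct) (simp_all add: smult_add_right)

lemma comb_add: "combW r W c1 + combW r W c2 = combW r W (\<lambda>i. c1 i + c2 i)"
  unfolding combW_def by (simp add: sum.distrib smult_add_left)

lemma comb_diff: "combW r W c1 - combW r W c2 = combW r W (\<lambda>i. c1 i - c2 i)"
  unfolding combW_def by (simp add: sum_subtractf smult_diff_left)

lemma comb_cong: "(\<And>i. i < r \<Longrightarrow> c1 i = c2 i) \<Longrightarrow> combW r W c1 = combW r W c2"
  unfolding combW_def by (intro sum.cong) auto

lemma inA_comb: "is_basis_A L W \<Longrightarrow> in_A L (combW (degree L) W c)"
  unfolding is_basis_A_def in_A_def combW_def by (simp add: coeff_sum)

lemma comb_unique:
  assumes B: "is_basis_A L W" and e: "combW (degree L) W c1 = combW (degree L) W c2" and i: "i < degree L"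
  shows "c1 i = c2 i"
proof -
  define d1 where "d1 = (\<lambda>j. if j < degree L then c1 j else 0)"
  define d2 where "d2 = (\<lambda>j. if j < degree L then c2 j else 0)"
  have 1: "combW (degree L) W d1 = combW (degree L) W c1" by (rule comb_cong) (simp add: d1_def)
  have 2: "combW (degree L) W d2 = combW (degree L) W c1" using e by (metis comb_cong d2_def)
  have "\<exists>!c. (\<forall>i\<ge>degree L. c i = 0) \<and> combW (degree L) W c1 = combW (degree L) W c"
    using B inA_comb[OF B] unfolding is_basis_A_def by blast
  moreover have "(\<forall>i\<ge>degree L. d1 i = 0) \<and> combW (degree L) W c1 = combW (degree L) W d1"
    using 1 by (simp add: d1_def)
  moreover have "(\<forall>i\<ge>degree L. d2 i = 0) \<and> combW (degree L) W c1 = combW (degree L) W d2"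
    using 2 by (simp add: d2_def)
  ultimately have "d1 = d2" by blast
  then show ?thesis using i by (metis d1_def d2_def)
qed

lemma integral_comb:
  assumes "local_integral_basis \<iota> L z W" "\<forall>i<degree L. c i \<in> local_ring \<iota> z"
  shows "integral_at \<iota> L z (combW (degree L) W c)"
  using assms unfolding local_integral_basis_def by blast

lemma integral_coeffs:
  assumes B: "is_basis_A L W" and LI: "local_integral_basis \<iota> L z W"
    and I: "integral_at \<iota> L z (combW (degree L) W c)" and i: "i < degree L"
  shows "c i \<in> local_ring \<iota> z"
proof -
  have "combW (degree L) W c \<in> {F. in_A L F \<and> integral_at \<iota> L z F}"
    using I inA_comb[OF B] by blast
  then obtain c' where c': "combW (degree L) W c = combW (degree L) W c'" "\<forall>i<degree L. c' i \<in> local_ring \<iota> z"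
    using LI unfolding local_integral_basis_def by blast
  show ?thesis using comb_unique[OF B c'(1) i] c'(2) i by simp
qed


context
  fixes \<iota> :: "'c::{field_char_0,field_gcd} \<Rightarrow> 'k::field_char_0"
  assumes hi: "rhom \<iota>" and ii: "inj \<iota>"
begin

lemmas Ev_1c = Ev_1[OF hi ii]
lemmas Ev_Gcdc = Ev_Gcd[OF hi ii]
lemmas LR_notc = LR_not[OF hi ii]
lemmas integral_shiftc = integral_shift[OF hi ii]
lemmas LR_addc = LR_add[OF hi ii]
lemmas LR_fracc = LR_frac[OF hi ii]
lemmas LR_diffc = LR_diff[OF hi ii]
lemmas LR_multc = LR_mult[OF hi ii]
lemmas LR_sumc = LR_sum[OF hi ii]
lemmas Ev_shiftc = Ev_shift[OF hi ii]

lemma NL: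
  fixes L :: "'c::{field_char_0,field_gcd} poly poly" and v u :: "'c poly" and a b :: "nat \<Rightarrow> 'c poly"
  assumes gcd_v: "Gcd (insert v (b ` {..<degree L})) = 1" and v0: "v \<noteq> 0" and ev: "Ev \<iota> z v = 0"
    and all: "\<forall>i<degree L. to_fract (b i) / to_fract v \<in> local_ring \<iota> z"
  shows False
proof -
  have "Ev \<iota> z (Gcd (insert v (b ` {..<degree L}))) = 0"
    by (rule Ev_Gcdc) (use ev all LR_notc[OF ev v0] in auto)
  then show False using gcd_v Ev_1c by simp
qed

lemma tele_shift:
  fixes L :: "'c::{field_char_0,field_gcd} poly poly" and v u :: "'c poly" and a b :: "nat \<Rightarrow> 'c poly"
  assumes tele: "fracW (degree L) W a u = DeltaA L (fracW (degree L) W b v)"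
  shows "shiftS L (combW (degree L) W (\<lambda>i. to_fract (b i) / to_fract v)) =
         combW (degree L) W (\<lambda>i. to_fract (a i) / to_fract u + to_fract (b i) / to_fract v)"
  using tele unfolding fracW_def DeltaA_def comb_add[symmetric] by (simp add: algebra_simps)

lemma left_root:
  fixes L :: "'c::{field_char_0,field_gcd} poly poly" and v u :: "'c poly" and a b :: "nat \<Rightarrow> 'c poly"
  assumes B: "is_basis_A L W"
    and gcd_v: "Gcd (insert v (b ` {..<degree L})) = 1" and v0: "v \<noteq> 0"
    and tele: "fracW (degree L) W a u = DeltaA L (fracW (degree L) W b v)"
    and r1: "Ev \<iota> (z + 1) v = 0" and r0: "Ev \<iota> z v \<noteq> 0"
    and LI0: "local_integral_basis \<iota> L z W" and LI1: "local_integral_basis \<iota> L (z + 1) W"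
  shows "Ev \<iota> z u = 0"
proof (rule ccontr)
  assume u: "Ev \<iota> z u \<noteq> 0"
  have "\<forall>i<degree L. to_fract (a i) / to_fract u + to_fract (b i) / to_fract v \<in> local_ring \<iota> z"
    using u r0 by (simp add: LR_addc LR_fracc)
  then have "integral_at \<iota> L z (shiftS L (combW (degree L) W (\<lambda>i. to_fract (b i) / to_fract v)))"
    unfolding tele_shift[OF tele] by (rule integral_comb[OF LI0, rotated])
  then have "integral_at \<iota> L (z + 1) (combW (degree L) W (\<lambda>i. to_fract (b i) / to_fract v))"
    by (simp add: integral_shiftc)
  then have "\<forall>i<degree L. to_fract (b i) / to_fract v \<in> local_ring \<iota> (z + 1)"
    using integral_coeffs[OF B LI1] by blast
  then show False using NL[OF gcd_v v0 r1] by blast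
qed

lemma right_root:
  fixes L :: "'c::{field_char_0,field_gcd} poly poly" and v u :: "'c poly" and a b :: "nat \<Rightarrow> 'c poly"
  assumes B: "is_basis_A L W"
    and gcd_v: "Gcd (insert v (b ` {..<degree L})) = 1" and v0: "v \<noteq> 0"
    and tele: "fracW (degree L) W a u = DeltaA L (fracW (degree L) W b v)"
    and r0: "Ev \<iota> z v = 0" and r1: "Ev \<iota> (z + 1) v \<noteq> 0"
    and LI0: "local_integral_basis \<iota> L z W" and LI1: "local_integral_basis \<iota> L (z + 1) W"
  shows "Ev \<iota> z u = 0"
proof (rule ccontr)
  assume u: "Ev \<iota> z u \<noteq> 0"
  have "\<forall>i<degree L. to_fract (b i) / to_fract v \<in> local_ring \<iota> (z + 1)"
    using r1 by (simp add: LR_fracc)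
  then have "integral_at \<iota> L (z + 1) (combW (degree L) W (\<lambda>i. to_fract (b i) / to_fract v))"
    by (rule integral_comb[OF LI1])
  then have "integral_at \<iota> L z (combW (degree L) W (\<lambda>i. to_fract (a i) / to_fract u + to_fract (b i) / to_fract v))"
    unfolding tele_shift[OF tele, symmetric] by (simp add: integral_shiftc)
  then have h: "\<forall>i<degree L. to_fract (a i) / to_fract u + to_fract (b i) / to_fract v \<in> local_ring \<iota> z"
    using integral_coeffs[OF B LI0] by blast
  have "\<forall>i<degree L. to_fract (b i) / to_fract v \<in> local_ring \<iota> z"
  proof (intro allI impI)
    fix i assume "i < degree L"
    then have "(to_fract (a i) / to_fract u + to_fract (b i) / to_fract v) - to_fract (a i) / to_fract u \<in> local_ring \<iota> z"
      using h by (intro LR_diffc LR_fracc u) auto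
    then show "to_fract (b i) / to_fract v \<in> local_ring \<iota> z" by simp
  qed
  then show False using NL[OF gcd_v v0 r0] by blast
qed

lemma right_root2:
  fixes L :: "'c::{field_char_0,field_gcd} poly poly" and v u :: "'c poly" and a b :: "nat \<Rightarrow> 'c poly"
  assumes B: "is_basis_A L W"
    and gcd_v: "Gcd (insert v (b ` {..<degree L})) = 1" and v0: "v \<noteq> 0"
    and tele: "fracW (degree L) W a u = DeltaA L (fracW (degree L) W b v)"
    and r0: "Ev \<iota> z v = 0" and r1: "Ev \<iota> (z + 1) v \<noteq> 0"
    and ez: "Ev \<iota> z e \<noteq> 0"
    and SW: "\<forall>i<degree L. shiftS L (W i) = (\<Sum>j<degree L. smult (to_fract (M i j) / to_fract e) (W j))"
  shows "Ev \<iota> z u = 0"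
proof (rule ccontr)
  assume u: "Ev \<iota> z u \<noteq> 0"
  define r where "r = degree L"
  define bf where "bf = (\<lambda>i. to_fract (b i) / to_fract v)"
  define cc where "cc = (\<lambda>j. \<Sum>i<r. sigma_rat (bf i) * (to_fract (M i j) / to_fract e))"
  have "shiftS L (combW r W bf) = (\<Sum>i<r. smult (sigma_rat (bf i)) (shiftS L (W i)))"
    by (rule shiftS_comb)
  also have "\<dots> = (\<Sum>i<r. smult (sigma_rat (bf i)) (\<Sum>j<r. smult (to_fract (M i j) / to_fract e) (W j)))"
    using SW unfolding r_def by (intro sum.cong refl) simp
  also have "\<dots> = (\<Sum>i<r. \<Sum>j<r. smult (sigma_rat (bf i) * (to_fract (M i j) / to_fract e)) (W j))"
    by (simp add: smult_sum_right)
  also have "\<dots> = combW r W cc"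
    unfolding combW_def cc_def by (subst sum.swap) (simp add: smult_sum)
  finally have S1: "shiftS L (combW r W bf) = combW r W cc" .
  have sv: "sigma_rat (bf i) \<in> local_ring \<iota> z" for i
  proof -
    have "sigma_rat (bf i) = to_fract (pcompose (b i) [:1,1:]) / to_fract (pcompose v [:1,1:])"
      unfolding bf_def by (rule sigma_ops(4)[OF v0])
    moreover have "Ev \<iota> z (pcompose v [:1,1:]) \<noteq> 0" using r1 by (simp add: Ev_shiftc)
    ultimately show ?thesis by (simp add: LR_fracc)
  qed
  have ccl: "cc j \<in> local_ring \<iota> z" for j
    unfolding cc_def by (intro LR_sumc LR_multc sv LR_fracc ez)
  have eq: "cc j = to_fract (a j) / to_fract u + bf j" if "j < r" for j
    using comb_unique[OF B, of cc "\<lambda>i. to_fract (a i) / to_fract u + bf i" j] S1 tele_shift[OF tele] that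
    unfolding r_def bf_def by simp
  have "\<forall>i<degree L. to_fract (b i) / to_fract v \<in> local_ring \<iota> z"
  proof (intro allI impI)
    fix i assume i: "i < degree L"
    have "cc i - to_fract (a i) / to_fract u \<in> local_ring \<iota> z"
      by (intro LR_diffc ccl LR_fracc u)
    then show "to_fract (b i) / to_fract v \<in> local_ring \<iota> z" using eq[of i] i by (simp add: r_def bf_def)
  qed
  then show False using NL[OF gcd_v v0 r0] by blast
qed

end


lemma disp_ge:
  assumes "poly p (\<alpha> + of_int m) = 0" "poly p (\<alpha> + of_int m + of_nat k) = 0"
  shows "ereal (real k) \<le> disp \<alpha> p"
  unfolding disp_def by (rule Sup_upper) (use assms in blast)

lemma disp_le:
  assumes "\<And>k m. poly p (\<alpha> + of_int m) = 0 \<Longrightarrow> poly p (\<alpha> + of_int m + of_nat k) = 0 \<Longrightarrow> real k \<le> B"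
  shows "disp \<alpha> p \<le> ereal B"
  unfolding disp_def by (rule Sup_least) (use assms in auto)

lemma disp_nonempty:
  assumes "disp \<alpha> p \<ge> 0"
  shows "\<exists>m. poly p (\<alpha> + of_int m) = 0"
proof (rule ccontr)
  assume "\<not> ?thesis"
  then have "disp \<alpha> p = Sup {}" unfolding disp_def by (intro arg_cong[where f=Sup]) auto
  then show False using assms by (simp add: bot_ereal_def)
qed

lemma disp_two:
  fixes \<alpha> :: "'k::field_char_0"
  assumes "poly p (\<alpha> + of_int m1) = 0" "poly p (\<alpha> + of_int m2) = 0" "m1 \<noteq> m2"
  shows "disp \<alpha> p \<ge> 1"
proof -
  have "\<exists>m k. poly p (\<alpha> + of_int m) = 0 \<and> poly p (\<alpha> + of_int m + of_nat k) = 0 \<and> k \<ge> 1"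
  proof (cases "m1 < m2")
    case True
    then show ?thesis using assms
      by (intro exI[of _ m1] exI[of _ "nat (m2 - m1)"]) (auto simp: of_nat_nat)
  next
    case False
    then show ?thesis using assms
      by (intro exI[of _ m2] exI[of _ "nat (m1 - m2)"]) (auto simp: of_nat_nat)
  qed
  then obtain m k where "poly p (\<alpha> + of_int m) = 0" "poly p (\<alpha> + of_int m + of_nat k) = 0" "k \<ge> 1"
    by blast
  then have "ereal (real k) \<le> disp \<alpha> p" "ereal (real k) \<ge> 1" by (auto intro: disp_ge)
  then show ?thesis by order
qed

theorem mainTheorem3:
  fixes \<iota> :: "'c::{field_char_0,field_gcd} \<Rightarrow> 'k::field_char_0"
    and L :: "'c poly poly"
    and W :: "nat \<Rightarrow> 'c poly fract poly"
    and a b :: "nat \<Rightarrow> 'c poly"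
    and u v :: "'c poly"
    and \<alpha> :: 'k
  assumes clos: "is_alg_closure \<iota>"
    and L0: "coeff L 0 \<noteq> 0" and Lr: "lead_coeff L \<noteq> 0"
    and basis: "is_basis_A L W"
    and u0: "u \<noteq> 0" and v0: "v \<noteq> 0"
    and gcd_u: "Gcd (insert u (a ` {..<degree L})) = 1"
    and gcd_v: "Gcd (insert v (b ` {..<degree L})) = 1"
    and tele: "fracW (degree L) W a u = DeltaA L (fracW (degree L) W b v)"
    and dispv: "disp \<alpha> (map_poly \<iota> v) \<ge> 0"
  shows "((\<forall>m::int. local_integral_basis \<iota> L (\<alpha> + of_int m) W) \<longrightarrow>
            disp \<alpha> (map_poly \<iota> u) \<ge> disp \<alpha> (map_poly \<iota> v) + 1)
       \<and> (\<forall>(e :: 'c poly) (M :: nat \<Rightarrow> nat \<Rightarrow> 'c poly) (\<beta> :: 'k).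
            e \<noteq> 0 \<longrightarrow>
            (\<forall>i<degree L. shiftS L (W i) =
                 (\<Sum>j<degree L. smult (to_fract (M i j) / to_fract e) (W j))) \<longrightarrow>
            (\<exists>k::int. \<beta> = \<alpha> + of_int k) \<longrightarrow>
            (\<forall>\<eta>\<in>{\<eta>. (\<exists>m::int. \<eta> = \<alpha> + of_int m) \<and> (\<exists>j::nat. \<beta> - \<eta> = of_nat j)}.
                 local_integral_basis \<iota> L \<eta> W) \<longrightarrow>
            (\<forall>m::int. poly (map_poly \<iota> e) (\<alpha> + of_int m) = 0 \<longrightarrow> \<alpha> + of_int m = \<beta>) \<longrightarrow>
            disp \<alpha> ([:- \<beta>, 1:] * map_poly \<iota> u) \<ge> 1)"
proof -
  have hi: "rhom \<iota>" by (rule clos_rhom[OF clos])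
  have ii: "inj \<iota>" by (rule clos_inj[OF clos])
  define R where "R = {m::int. Ev \<iota> (\<alpha> + of_int m) v = 0}"
  have inR: "m \<in> R \<longleftrightarrow> poly (map_poly \<iota> v) (\<alpha> + of_int m) = 0" for m
    by (simp add: R_def Ev_def[OF hi ii])
  have vnz: "map_poly \<iota> v \<noteq> 0" by (rule map_poly_inj_nz[OF hi ii v0])
  have "finite {x. poly (map_poly \<iota> v) x = 0}" by (rule poly_roots_finite[OF vnz])
  moreover have "inj (\<lambda>m::int. \<alpha> + of_int m)" by (rule injI) simp
  ultimately have "finite ((\<lambda>m::int. \<alpha> + of_int m) -` {x. poly (map_poly \<iota> v) x = 0})"
    by (rule finite_vimageI)
  moreover have "R = (\<lambda>m::int. \<alpha> + of_int m) -` {x. poly (map_poly \<iota> v) x = 0}"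
    using inR by auto
  ultimately have finR: "finite R" by simp
  have neR: "R \<noteq> {}" using disp_nonempty[OF dispv] inR by blast
  define mn where "mn = Min R"
  define mx where "mx = Max R"
  have mnR: "mn \<in> R" and mxR: "mx \<in> R" using finR neR by (simp_all add: mn_def mx_def)
  have bnd: "m \<in> R \<Longrightarrow> mn \<le> m \<and> m \<le> mx" for m using finR by (simp add: mn_def mx_def)
  have notR1: "mn - 1 \<notin> R" using bnd[of "mn - 1"] by auto
  have notR2: "mx + 1 \<notin> R" using bnd[of "mx + 1"] by auto
  have e1: "\<alpha> + of_int (mn - 1) + 1 = \<alpha> + of_int mn" by simp
  have e2: "\<alpha> + of_int mx + 1 = \<alpha> + of_int (mx + 1)" by simp
  have dv: "disp \<alpha> (map_poly \<iota> v) \<le> ereal (real_of_int (mx - mn))"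
  proof (rule disp_le)
    fix k m assume "poly (map_poly \<iota> v) (\<alpha> + of_int m) = 0" "poly (map_poly \<iota> v) (\<alpha> + of_int m + of_nat k) = 0"
    then have "m \<in> R" "m + int k \<in> R" using inR by (simp_all add: add.assoc)
    then have "int k \<le> mx - mn" using bnd[of m] bnd[of "m + int k"] by linarith
    then show "real k \<le> real_of_int (mx - mn)" by (metis of_int_of_nat_eq of_int_le_iff)
  qed
  have rootL: "Ev \<iota> (\<alpha> + of_int (mn - 1)) u = 0"
    if LI0: "local_integral_basis \<iota> L (\<alpha> + of_int (mn - 1)) W"
    and LI1: "local_integral_basis \<iota> L (\<alpha> + of_int mn) W"
  proof (rule left_root[OF hi ii basis gcd_v v0 tele])
    show "Ev \<iota> (\<alpha> + of_int (mn - 1) + 1) v = 0" using mnR unfolding e1 by (simp add: R_def)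
    show "Ev \<iota> (\<alpha> + of_int (mn - 1)) v \<noteq> 0" using notR1 by (simp add: R_def)
    show "local_integral_basis \<iota> L (\<alpha> + of_int (mn - 1)) W" by (rule LI0)
    show "local_integral_basis \<iota> L (\<alpha> + of_int (mn - 1) + 1) W" unfolding e1 by (rule LI1)
  qed
  have part1: "(\<forall>m::int. local_integral_basis \<iota> L (\<alpha> + of_int m) W) \<longrightarrow>
            disp \<alpha> (map_poly \<iota> u) \<ge> disp \<alpha> (map_poly \<iota> v) + 1"
  proof
    assume LIall: "\<forall>m::int. local_integral_basis \<iota> L (\<alpha> + of_int m) W"
    have r1: "Ev \<iota> (\<alpha> + of_int (mn - 1)) u = 0" using rootL LIall by blast
    have r2: "Ev \<iota> (\<alpha> + of_int mx) u = 0"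
    proof (rule right_root[OF hi ii basis gcd_v v0 tele])
      show "Ev \<iota> (\<alpha> + of_int mx) v = 0" using mxR by (simp add: R_def)
      show "Ev \<iota> (\<alpha> + of_int mx + 1) v \<noteq> 0" using notR2 unfolding e2 by (simp add: R_def)
      show "local_integral_basis \<iota> L (\<alpha> + of_int mx) W" using LIall by blast
      show "local_integral_basis \<iota> L (\<alpha> + of_int mx + 1) W" unfolding e2 using LIall by blast
    qed
    have mnmx: "mn \<le> mx" using bnd[OF mnR] by simp
    have "ereal (real (nat (mx - mn + 1))) \<le> disp \<alpha> (map_poly \<iota> u)"
    proof (rule disp_ge)
      show "poly (map_poly \<iota> u) (\<alpha> + of_int (mn - 1)) = 0" using r1 by (simp add: Ev_def[OF hi ii])
      have eqx: "\<alpha> + of_int (mn - 1) + of_nat (nat (mx - mn + 1)) = \<alpha> + of_int mx"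
        using mnmx by (simp add: of_nat_nat)
      show "poly (map_poly \<iota> u) (\<alpha> + of_int (mn - 1) + of_nat (nat (mx - mn + 1))) = 0"
        unfolding eqx using r2 by (simp add: Ev_def[OF hi ii])
    qed
    moreover have "real (nat (mx - mn + 1)) = real_of_int (mx - mn) + 1" using mnmx by simp
    ultimately have "ereal (real_of_int (mx - mn)) + 1 \<le> disp \<alpha> (map_poly \<iota> u)" by simp
    moreover have "disp \<alpha> (map_poly \<iota> v) + 1 \<le> ereal (real_of_int (mx - mn)) + 1"
      by (rule add_right_mono[OF dv])
    ultimately show "disp \<alpha> (map_poly \<iota> u) \<ge> disp \<alpha> (map_poly \<iota> v) + 1" by order
  qed
  have part2: "\<forall>(e :: 'c poly) (M :: nat \<Rightarrow> nat \<Rightarrow> 'c poly) (\<beta> :: 'k).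
            e \<noteq> 0 \<longrightarrow>
            (\<forall>i<degree L. shiftS L (W i) =
                 (\<Sum>j<degree L. smult (to_fract (M i j) / to_fract e) (W j))) \<longrightarrow>
            (\<exists>k::int. \<beta> = \<alpha> + of_int k) \<longrightarrow>
            (\<forall>\<eta>\<in>{\<eta>. (\<exists>m::int. \<eta> = \<alpha> + of_int m) \<and> (\<exists>j::nat. \<beta> - \<eta> = of_nat j)}.
                 local_integral_basis \<iota> L \<eta> W) \<longrightarrow>
            (\<forall>m::int. poly (map_poly \<iota> e) (\<alpha> + of_int m) = 0 \<longrightarrow> \<alpha> + of_int m = \<beta>) \<longrightarrow>
            disp \<alpha> ([:- \<beta>, 1:] * map_poly \<iota> u) \<ge> 1"
  proof (intro allI impI)
    fix e :: "'c poly" and M :: "nat \<Rightarrow> nat \<Rightarrow> 'c poly" and \<beta> :: 'k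
    assume e0: "e \<noteq> 0"
      and SW: "\<forall>i<degree L. shiftS L (W i) = (\<Sum>j<degree L. smult (to_fract (M i j) / to_fract e) (W j))"
      and hb: "\<exists>k::int. \<beta> = \<alpha> + of_int k"
      and LIZ: "\<forall>\<eta>\<in>{\<eta>. (\<exists>m::int. \<eta> = \<alpha> + of_int m) \<and> (\<exists>j::nat. \<beta> - \<eta> = of_nat j)}.
                 local_integral_basis \<iota> L \<eta> W"
      and eroot: "\<forall>m::int. poly (map_poly \<iota> e) (\<alpha> + of_int m) = 0 \<longrightarrow> \<alpha> + of_int m = \<beta>"
    obtain kb where kb: "\<beta> = \<alpha> + of_int kb" using hb by blast
    have LIle: "local_integral_basis \<iota> L (\<alpha> + of_int m) W" if "m \<le> kb" for m
    proof -
      have "\<beta> - (\<alpha> + of_int m) = of_nat (nat (kb - m))" using that kb by (simp add: of_nat_nat)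
      then show ?thesis using LIZ by blast
    qed
    obtain m0 where m0: "Ev \<iota> (\<alpha> + of_int m0) u = 0" "m0 \<noteq> kb"
    proof (cases "mn \<le> kb")
      case True
      have "Ev \<iota> (\<alpha> + of_int (mn - 1)) u = 0"
        by (rule rootL; rule LIle) (use True in simp_all)
      then show ?thesis using that[of "mn - 1"] True by simp
    next
      case False
      have ez: "Ev \<iota> (\<alpha> + of_int mx) e \<noteq> 0"
      proof
        assume "Ev \<iota> (\<alpha> + of_int mx) e = 0"
        then have "\<alpha> + of_int mx = \<beta>" using eroot by (simp add: Ev_def[OF hi ii])
        then have "mx = kb" using kb by simp
        then show False using False bnd[OF mnR] by simp
      qed
      have "Ev \<iota> (\<alpha> + of_int mx) u = 0"
      proof (rule right_root2[OF hi ii basis gcd_v v0 tele _ _ ez SW])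
        show "Ev \<iota> (\<alpha> + of_int mx) v = 0" using mxR by (simp add: R_def)
        show "Ev \<iota> (\<alpha> + of_int mx + 1) v \<noteq> 0" using notR2 unfolding e2 by (simp add: R_def)
      qed
      then show ?thesis using that[of mx] False bnd[OF mnR] by simp
    qed
    have p1: "poly ([:- \<beta>, 1:] * map_poly \<iota> u) (\<alpha> + of_int kb) = 0" using kb by (simp add: algebra_simps)
    have p2: "poly ([:- \<beta>, 1:] * map_poly \<iota> u) (\<alpha> + of_int m0) = 0"
      using m0(1) by (simp add: Ev_def[OF hi ii])
    show "disp \<alpha> ([:- \<beta>, 1:] * map_poly \<iota> u) \<ge> 1"
      by (rule disp_two[OF p1 p2]) (use m0 in simp)
  qed
  show ?thesis using part1 part2 by blast
qed

end
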